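(* Let $(X,\|\cdot\|)$ be a Banach space, $B_X=\{x\in X:\|x\|\le1\}$, and let $B\subset X\setminus B_X$ be nonempty with $\mathrm{dist}(B,B_X)\ge1$. Suppose the ordered pair $(B_X,B)$ has the $UC$ property and there exists $p\in B$ with $\mathrm{dist}(p,B_X)=\mathrm{dist}(B,B_X)$. If $\{x_n\}_{n=1}^\infty,\{z_n\}_{n=1}^\infty\subset B_X$ and real numbers $\lambda_n$ satisfy $\lim_{n\to\infty}\left\|\frac{x_n+z_n}{2}\right\|=1$ and $x_n+z_n=|\lambda_n|\,p$ for all $n$, then $\lim_{n\to\infty}\|x_n-z_n\|=0$.
   Context: $\mathrm{dist}(A,B)=\inf\{\|a-b\|:a\in A,b\in B\}$ and $\mathrm{dist}(p,A)=\mathrm{dist}(\{p\},A)$. The ordered pair $(A,B)$ has the $UC$ property if for all sequences $\{x_n\},\{z_n\}\subset A$, $\{y_n\}\subset B$ with $\lim_n\|x_n-y_n\|=\lim_n\|z_n-y_n\|=\mathrm{dist}(A,B)$ one has $\lim_n\|x_n-z_n\|=0$. *)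

theory Defs
  imports "HOL-Analysis.Analysis"
begin

text \<open>The UC property of an ordered pair (A,B); the distance of sets is the library's setdist
  (the infimum of norm (a - b) over a in A, b in B, for nonempty A, B).\<close>
definition UC_property :: "'a::real_normed_vector set \<Rightarrow> 'a set \<Rightarrow> bool" where
  "UC_property A B \<longleftrightarrow>
     (\<forall>x z y. (\<forall>n::nat. x n \<in> A \<and> z n \<in> A \<and> y n \<in> B) \<longrightarrow>
        (\<lambda>n. norm (x n - y n)) \<longlonglongrightarrow> setdist A B \<longrightarrow>
        (\<lambda>n. norm (z n - y n)) \<longlonglongrightarrow> setdist A B \<longrightarrow>
        (\<lambda>n. norm (x n - z n)) \<longlonglongrightarrow> 0)"

end

theory Submission
  imports Defs
begin

theorem lemma46:
  fixes B :: "'a::banach set" and p :: 'a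
    and x z :: "nat \<Rightarrow> 'a" and lam :: "nat \<Rightarrow> real"
  assumes "B \<subseteq> - cball 0 1" and "B \<noteq> {}"
    and "setdist B (cball 0 1) \<ge> 1"
    and "UC_property (cball 0 1) B"
    and "p \<in> B" and "setdist {p} (cball 0 1) = setdist B (cball 0 1)"
    and "\<And>n. x n \<in> cball 0 1" and "\<And>n. z n \<in> cball 0 1"
    and "(\<lambda>n. norm ((1/2) *\<^sub>R (x n + z n))) \<longlonglongrightarrow> 1"
    and "\<And>n. x n + z n = \<bar>lam n\<bar> *\<^sub>R p"
  shows "(\<lambda>n. norm (x n - z n)) \<longlonglongrightarrow> 0"
proof -
  define D where "D = setdist B (cball 0 (1::real))"
  have D1: "D \<ge> 1" using assms(3) D_def by simp
  have Dsym: "setdist (cball 0 1) B = D" using D_def setdist_sym by metis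
  have pn: "norm p > 1" using assms(1,5) by (auto simp: dist_norm)
  have up: "setdist {p} (cball 0 1) \<le> norm p - 1"
  proof -
    have "(1 / norm p) *\<^sub>R p \<in> cball 0 1" using pn by simp
    hence "setdist {p} (cball 0 1) \<le> dist p ((1 / norm p) *\<^sub>R p)"
      by (intro setdist_le_dist) auto
    also have "p - (1 / norm p) *\<^sub>R p = (1 - 1 / norm p) *\<^sub>R p"
      by (simp add: algebra_simps)
    hence "dist p ((1 / norm p) *\<^sub>R p) = \<bar>1 - 1 / norm p\<bar> * norm p"
      by (simp add: dist_norm)
    also have "\<dots> = norm p - 1"
    proof -
      have "\<bar>1 - 1 / norm p\<bar> = 1 - 1 / norm p"
        using pn by (intro abs_of_nonneg) (simp add: divide_le_eq)
      moreover have "p \<noteq> 0" using pn by auto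
      ultimately show ?thesis using pn by (simp add: field_simps)
    qed
    finally show ?thesis .
  qed
  have lo: "norm p - 1 \<le> setdist {p} (cball 0 1)"
  proof (rule le_setdistI)
    fix a b assume "a \<in> {p}" "b \<in> cball (0::'a) 1"
    thus "norm p - 1 \<le> dist a b"
      using norm_triangle_ineq2[of p b] by (auto simp: dist_norm)
  qed auto
  have np: "norm p = 1 + D" using up lo assms(6) D_def by simp
  have lim1: "(\<lambda>n. \<bar>lam n\<bar> * norm p) \<longlonglongrightarrow> 2"
  proof -
    have "(\<lambda>n. 2 * norm ((1/2) *\<^sub>R (x n + z n))) \<longlonglongrightarrow> 2 * 1"
      by (intro tendsto_mult tendsto_const assms(9))
    moreover have "\<And>n. 2 * norm ((1/2) *\<^sub>R (x n + z n)) = \<bar>lam n\<bar> * norm p"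
      using assms(10) by simp
    ultimately show ?thesis by simp
  qed
  have key: "(\<lambda>n. norm (w n - p)) \<longlonglongrightarrow> D"
    if w: "\<And>n. w n \<in> cball 0 1" and v: "\<And>n. v n \<in> cball 0 1"
      and s: "\<And>n. w n + v n = \<bar>lam n\<bar> *\<^sub>R p" for w v
  proof (rule tendsto_sandwich)
    show "\<forall>\<^sub>F n in sequentially. D \<le> norm (w n - p)"
      using setdist_le_dist[OF w assms(5)] Dsym by (auto simp: dist_norm)
    have "(\<lambda>n. \<bar>\<bar>lam n\<bar> * norm p - norm p\<bar> + 1) \<longlonglongrightarrow> \<bar>2 - norm p\<bar> + 1"
      by (intro tendsto_intros lim1)
    moreover have "\<bar>2 - norm p\<bar> + 1 = D" using np D1 by simp
    ultimately show "(\<lambda>n. \<bar>\<bar>lam n\<bar> * norm p - norm p\<bar> + 1) \<longlonglongrightarrow> D" by simp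
    show "\<forall>\<^sub>F n in sequentially. norm (w n - p) \<le> \<bar>\<bar>lam n\<bar> * norm p - norm p\<bar> + 1"
    proof (intro always_eventually allI)
      fix n
      have "w n - p = (\<bar>lam n\<bar> - 1) *\<^sub>R p - v n" using s[of n]
        by (simp add: algebra_simps)
      hence "norm (w n - p) \<le> norm ((\<bar>lam n\<bar> - 1) *\<^sub>R p) + norm (v n)"
        by (metis norm_triangle_ineq4)
      also have "norm ((\<bar>lam n\<bar> - 1) *\<^sub>R p) = \<bar>\<bar>lam n\<bar> * norm p - norm p\<bar>"
      proof -
        have "\<bar>lam n\<bar> * norm p - norm p = (\<bar>lam n\<bar> - 1) * norm p"
          by (simp add: algebra_simps)
        thus ?thesis by (simp add: abs_mult)
      qed
      finally show "norm (w n - p) \<le> \<bar>\<bar>lam n\<bar> * norm p - norm p\<bar> + 1"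
        using v[of n] by simp
    qed
  qed simp
  have kx: "(\<lambda>n. norm (x n - p)) \<longlonglongrightarrow> D" by (rule key[OF assms(7,8,10)])
  have kz: "(\<lambda>n. norm (z n - p)) \<longlonglongrightarrow> D"
  proof (rule key[OF assms(8,7)])
    fix n show "z n + x n = \<bar>lam n\<bar> *\<^sub>R p" using assms(10)[of n] by (simp add: add.commute)
  qed
  have "\<forall>n. x n \<in> cball 0 1 \<and> z n \<in> cball 0 1 \<and> (\<lambda>n. p) n \<in> B"
    using assms(5,7,8) by simp
  moreover have "(\<lambda>n. norm (x n - (\<lambda>n. p) n)) \<longlonglongrightarrow> setdist (cball 0 1) B"
    using kx Dsym by simp
  moreover have "(\<lambda>n. norm (z n - (\<lambda>n. p) n)) \<longlonglongrightarrow> setdist (cball 0 1) B"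
    using kz Dsym by simp
  ultimately show ?thesis
    using assms(4)[unfolded UC_property_def, rule_format, of x z "\<lambda>n. p"] by simp
qed

end
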